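(* Let $p_1$ and $p_2$ be probability densities on $\mathbb{R}^n$, and for $\omega\in[0,1]$ define \[ \zeta^h(\omega)=\int_{\mathbb{R}^n}\frac{p_1(\mathbf{x})\,p_2(\mathbf{x})}{(1-\omega)\,p_1(\mathbf{x})+\omega\, p_2(\mathbf{x})}\,d\mathbf{x}. \] Then $\omega\mapsto\zeta^h(\omega)$ is a convex function on $[0,1]$, and $\zeta^h(\omega)\le 1$ for all $0\le\omega\le 1$.
   Context: $\zeta^h(\omega)$ is the normalization constant of the (weighted) harmonic mean density of $p_1$ and $p_2$: the unnormalized harmonic mean is $\mathcal{M}^h_\omega\{p_1,p_2\}(\mathbf{x})=\frac{p_1(\mathbf{x})p_2(\mathbf{x})}{(1-\omega)p_1(\mathbf{x})+\omega p_2(\mathbf{x})}$, where the integrand is taken to be $0$ at points where its numerator vanishes. *)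

theory Defs
  imports "HOL-Analysis.Analysis"
begin

definition prob_density :: "('a::euclidean_space \<Rightarrow> real) \<Rightarrow> bool" where
  "prob_density p \<longleftrightarrow> p \<in> borel_measurable lborel \<and> (\<forall>x. 0 \<le> p x)
     \<and> integrable lborel p \<and> (\<integral>x. p x \<partial>lborel) = 1"

text \<open>Unnormalized weighted harmonic mean, taken to be 0 where the numerator vanishes.\<close>
definition harm_mean :: "real \<Rightarrow> ('a \<Rightarrow> real) \<Rightarrow> ('a \<Rightarrow> real) \<Rightarrow> 'a \<Rightarrow> real" where
  "harm_mean \<omega> p1 p2 x =
     (if p1 x * p2 x = 0 then 0 else p1 x * p2 x / ((1 - \<omega>) * p1 x + \<omega> * p2 x))"

definition zeta_h :: "('a::euclidean_space \<Rightarrow> real) \<Rightarrow> ('a \<Rightarrow> real) \<Rightarrow> real \<Rightarrow> real" where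
  "zeta_h p1 p2 \<omega> = (\<integral>x. harm_mean \<omega> p1 p2 x \<partial>lborel)"

end

theory Submission
  imports Defs
begin

lemma inv_convex_pt:
  fixes s t L1 L2 :: real
  assumes "L1 > 0" "L2 > 0" "s \<ge> 0" "t \<ge> 0" "s + t = 1"
  shows "1 / (s*L1 + t*L2) \<le> s / L1 + t / L2"
proof -
  have tt: "t = 1 - s" using assms(5) by linarith
  have D: "s*L1 + t*L2 > 0"
  proof (cases "s = 0")
    case True thus ?thesis using tt assms(2) by simp
  next
    case False
    hence "s*L1 > 0" using assms by simp
    moreover have "t*L2 \<ge> 0" using assms by simp
    ultimately show ?thesis by linarith
  qed
  have P: "L1 * L2 > 0" using assms by simp
  have eq: "(s*L1 + t*L2) * (s*L2 + t*L1) - L1*L2 = s*t*(L1 - L2)^2"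
    unfolding tt by (simp add: algebra_simps power2_eq_square)
  have "s*t*(L1 - L2)^2 \<ge> 0" using assms by simp
  hence key: "1 * (L1*L2) \<le> (s*L2 + t*L1) * (s*L1 + t*L2)" using eq by (simp add: mult.commute)
  have "1 / (s*L1 + t*L2) \<le> (s*L2 + t*L1) / (L1*L2)"
    using key D P by (simp only: frac_le_eq) (simp add: divide_nonpos_pos mult.commute)
  also have "(s*L2 + t*L1) / (L1*L2) = s / L1 + t / L2"
    using assms(1,2) by (simp add: add_divide_distrib)
  finally show ?thesis .
qed

lemma hm_pos_case:
  fixes a b w :: real
  assumes "a > 0" "b > 0" "0 \<le> w" "w \<le> 1"
  shows "(1 - w) * a + w * b > 0"
proof (cases "w = 1")
  case True thus ?thesis using assms by simp
next
  case False
  hence "(1 - w) * a > 0" using assms by simp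
  moreover have "w * b \<ge> 0" using assms by simp
  ultimately show ?thesis by linarith
qed

lemma hm_bound:
  fixes a b w :: real
  assumes "a \<ge> 0" "b \<ge> 0" "0 \<le> w" "w \<le> 1"
  shows "0 \<le> harm_mean w (\<lambda>_. a) (\<lambda>_. b) x \<and> harm_mean w (\<lambda>_. a) (\<lambda>_. b) x \<le> (1 - w) * b + w * a"
proof (cases "a * b = 0")
  case True thus ?thesis using assms by (simp add: harm_mean_def)
next
  case False
  hence ab: "a > 0" "b > 0" using assms by (auto simp: less_eq_real_def)
  have L: "(1 - w) * a + w * b > 0" using hm_pos_case[OF ab assms(3,4)] .
  have "a * b \<le> ((1 - w) * a + w * b) * ((1 - w) * b + w * a)"
  proof -
    have "((1 - w) * a + w * b) * ((1 - w) * b + w * a) - a * b = w * (1 - w) * (a - b)^2"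
      by (simp add: algebra_simps power2_eq_square)
    moreover have "w * (1 - w) * (a - b)^2 \<ge> 0" using assms by simp
    ultimately show ?thesis by linarith
  qed
  hence "a * b / ((1 - w) * a + w * b) \<le> (1 - w) * b + w * a"
    using L by (simp add: divide_le_eq mult.commute)
  moreover have "a * b / ((1 - w) * a + w * b) \<ge> 0" using L ab by simp
  ultimately show ?thesis using False by (simp add: harm_mean_def)
qed

lemma hm_convex:
  fixes a b w1 w2 t :: real
  assumes "a \<ge> 0" "b \<ge> 0" "0 \<le> w1" "w1 \<le> 1" "0 \<le> w2" "w2 \<le> 1" "0 \<le> t" "t \<le> 1"
  shows "harm_mean ((1 - t) * w1 + t * w2) (\<lambda>_. a) (\<lambda>_. b) x
    \<le> (1 - t) * harm_mean w1 (\<lambda>_. a) (\<lambda>_. b) x + t * harm_mean w2 (\<lambda>_. a) (\<lambda>_. b) x"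
proof (cases "a * b = 0")
  case True thus ?thesis by (simp add: harm_mean_def)
next
  case False
  hence ab: "a > 0" "b > 0" using assms by (auto simp: less_eq_real_def)
  define L1 where "L1 = (1 - w1) * a + w1 * b"
  define L2 where "L2 = (1 - w2) * a + w2 * b"
  have L1: "L1 > 0" unfolding L1_def using hm_pos_case[OF ab assms(3,4)] .
  have L2: "L2 > 0" unfolding L2_def using hm_pos_case[OF ab assms(5,6)] .
  have E: "(1 - ((1 - t) * w1 + t * w2)) * a + ((1 - t) * w1 + t * w2) * b = (1 - t) * L1 + t * L2"
    unfolding L1_def L2_def by (simp add: algebra_simps)
  have I: "1 / ((1 - t) * L1 + t * L2) \<le> (1 - t) / L1 + t / L2"
    using inv_convex_pt[OF L1 L2] assms by simp
  have "a * b * (1 / ((1 - t) * L1 + t * L2)) \<le> a * b * ((1 - t) / L1 + t / L2)"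
    using I ab by (intro mult_left_mono) auto
  hence "a * b / ((1 - t) * L1 + t * L2) \<le> (1 - t) * (a * b / L1) + t * (a * b / L2)"
    by (simp add: algebra_simps)
  thus ?thesis using False unfolding harm_mean_def E L1_def[symmetric] L2_def[symmetric] by simp
qed

lemma hm_meas:
  assumes [measurable]: "p1 \<in> borel_measurable lborel" "p2 \<in> borel_measurable lborel"
  shows "harm_mean w p1 p2 \<in> borel_measurable (lborel::'a::euclidean_space measure)"
  unfolding harm_mean_def[abs_def] by measurable

lemma hm_bound_gen:
  assumes "0 \<le> p x" "0 \<le> q x" "0 \<le> w" "w \<le> 1"
  shows "0 \<le> harm_mean w p q x \<and> harm_mean w p q x \<le> (1 - w) * q x + w * p x"
  using hm_bound[OF assms, of x] by (simp add: harm_mean_def)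

lemma hm_convex_gen:
  assumes "0 \<le> p x" "0 \<le> q x" "0 \<le> w1" "w1 \<le> 1" "0 \<le> w2" "w2 \<le> 1" "0 \<le> t" "t \<le> 1"
  shows "harm_mean ((1 - t) * w1 + t * w2) p q x
    \<le> (1 - t) * harm_mean w1 p q x + t * harm_mean w2 p q x"
  using hm_convex[OF assms, of x] by (simp add: harm_mean_def)

theorem theorem2:
  fixes p1 p2 :: "'a::euclidean_space \<Rightarrow> real"
  assumes "prob_density p1" and "prob_density p2"
  shows "convex_on {0..1} (zeta_h p1 p2) \<and> (\<forall>\<omega>\<in>{0..1}. zeta_h p1 p2 \<omega> \<le> 1)"
proof -
  have m1: "p1 \<in> borel_measurable lborel" and n1: "\<And>x. 0 \<le> p1 x" and i1: "integrable lborel p1"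
    and e1: "(\<integral>x. p1 x \<partial>lborel) = 1" using assms(1) by (auto simp: prob_density_def)
  have m2: "p2 \<in> borel_measurable lborel" and n2: "\<And>x. 0 \<le> p2 x" and i2: "integrable lborel p2"
    and e2: "(\<integral>x. p2 x \<partial>lborel) = 1" using assms(2) by (auto simp: prob_density_def)
  have meas: "harm_mean w p1 p2 \<in> borel_measurable lborel" for w
    using hm_meas[OF m1 m2] .
  have bnd: "0 \<le> harm_mean w p1 p2 x \<and> harm_mean w p1 p2 x \<le> (1 - w) * p2 x + w * p1 x"
    if "0 \<le> w" "w \<le> 1" for w x
    by (rule hm_bound_gen[where p=p1 and q=p2 and x=x, OF n1 n2 that])
  have int: "integrable lborel (harm_mean w p1 p2)" if "0 \<le> w" "w \<le> 1" for w
  proof (rule Bochner_Integration.integrable_bound[OF _ meas])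
    show "integrable lborel (\<lambda>x. (1 - w) * p2 x + w * p1 x)" using i1 i2 by simp
    show "AE x in lborel. norm (harm_mean w p1 p2 x) \<le> norm ((1 - w) * p2 x + w * p1 x)"
    proof (rule AE_I2)
      fix x
      have "0 \<le> harm_mean w p1 p2 x" "harm_mean w p1 p2 x \<le> (1 - w) * p2 x + w * p1 x"
        using bnd[OF that, of x] by auto
      thus "norm (harm_mean w p1 p2 x) \<le> norm ((1 - w) * p2 x + w * p1 x)" by simp
    qed
  qed
  have le1: "zeta_h p1 p2 w \<le> 1" if "0 \<le> w" "w \<le> 1" for w
  proof -
    have "zeta_h p1 p2 w \<le> (\<integral>x. (1 - w) * p2 x + w * p1 x \<partial>lborel)"
      unfolding zeta_h_def
    proof (rule integral_mono)
      show "integrable lborel (harm_mean w p1 p2)" using int[OF that] .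
      show "integrable lborel (\<lambda>x. (1 - w) * p2 x + w * p1 x)" using i1 i2 by simp
      fix x show "harm_mean w p1 p2 x \<le> (1 - w) * p2 x + w * p1 x" using bnd[OF that, of x] by simp
    qed
    also have "\<dots> = 1" using i1 i2 e1 e2 by simp
    finally show ?thesis .
  qed
  have cvx: "convex_on {0..1} (zeta_h p1 p2)"
  proof (rule convex_onI)
    fix t x y :: real
    assume t: "0 < t" "t < 1" and xy: "x \<in> {0..1}" "y \<in> {0..1}"
    have x01: "0 \<le> x" "x \<le> 1" and y01: "0 \<le> y" "y \<le> 1" using xy by auto
    have z1: "0 \<le> (1 - t) * x + t * y" using t x01 y01 by simp
    have "(1 - t) * x \<le> 1 - t" using t x01 mult_left_mono[of x 1 "1 - t"] by simp
    moreover have "t * y \<le> t" using t y01 mult_left_mono[of y 1 t] by simp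
    ultimately have z2: "(1 - t) * x + t * y \<le> 1" by linarith
    have ix: "integrable lborel (harm_mean x p1 p2)" using int x01 by blast
    have iy: "integrable lborel (harm_mean y p1 p2)" using int y01 by blast
    have iz: "integrable lborel (harm_mean ((1 - t) * x + t * y) p1 p2)" using int z1 z2 by blast
    have "zeta_h p1 p2 ((1 - t) * x + t * y)
        \<le> (\<integral>z. (1 - t) * harm_mean x p1 p2 z + t * harm_mean y p1 p2 z \<partial>lborel)"
      unfolding zeta_h_def
    proof (intro integral_mono)
      show "integrable lborel (harm_mean ((1 - t) * x + t * y) p1 p2)" using iz .
      show "integrable lborel (\<lambda>z. (1 - t) * harm_mean x p1 p2 z + t * harm_mean y p1 p2 z)"
        using ix iy by simp
      fix z
      show "harm_mean ((1 - t) * x + t * y) p1 p2 z \<le> (1 - t) * harm_mean x p1 p2 z + t * harm_mean y p1 p2 z"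
        using x01 y01 t by (intro hm_convex_gen[where p=p1 and q=p2 and x=z, OF n1 n2]) auto
    qed
    also have "\<dots> = (1 - t) * zeta_h p1 p2 x + t * zeta_h p1 p2 y"
      unfolding zeta_h_def using ix iy by (simp add: integral_add integral_mult_right)
    finally show "zeta_h p1 p2 ((1 - t) *\<^sub>R x + t *\<^sub>R y) \<le> (1 - t) * zeta_h p1 p2 x + t * zeta_h p1 p2 y"
      by simp
  qed (rule convex_real_interval)
  show ?thesis using cvx le1 by auto
qed

end
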